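(* Given a schedule $\sigma$ of $n$ jobs on two machines and $k\ge1$, one run of the randomized $k$-swap algorithm terminates in $O(k\cdot n^{\lceil k/2\rceil}\cdot\log n)$ steps.
   Context: Problem $P2\|C_{\max}$: $n$ jobs with processing times $p_j>0$, two identical machines. A schedule $\sigma=(M_1,M_2)$ partitions the jobs; loads $L_i=\sum_{j\in M_i}p_j$, $\Delta=\max_iL_i-\min_iL_i$; label machines so that machine 1 has maximum load. Randomized $k$-swap algorithm: (1) assign each job independently and uniformly at random to $A$ or $B$; (2) for every $S_1\subseteq A$ with $|S_1|=\lceil k/2\rceil$ put $\sum_{j\in S_1\cap M_1}p_j-\sum_{j\in S_1\cap M_2}p_j$ (with reference to $S_1$) into $A_\Sigma$; (3) for every $S_2\subseteq B$ with $|S_2|=\lfloor k/2\rfloor$ put $\sum_{j\in S_2\cap M_1}p_j-\sum_{j\in S_2\cap M_2}p_j$ into $B_\Sigma$; (4) sort $B_\Sigma$ non-decreasingly; (5) for each $x\in A_\Sigma$ binary-search for $y\in B_\Sigma$ with $-x<y<\Delta-x$; if found, interchange the machine assignments of the jobs of the corresponding $S_1\cup S_2$ and return True; (6) otherwise return False. Steps are elementary operations (including arithmetic and comparisons on processing times) of unit cost. *)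

theory Defs
  imports Complex_Main
begin

text \<open>
Jobs are the indices 0..<n with processing times p j.
A schedule is a predicate sched :: nat => bool (True: job on the first machine
of the given partition, False: on the second). The random choices of step (1)
are given by coins :: nat => bool (True: job goes to A, False: to B).
For every algorithmic component we define its result function and a time
function T_... counting elementary operations (unit cost for arithmetic,
comparisons, list cons, and random access into the (array) B_Sigma), in the
style of "Functional Algorithms, Verified".
\<close>

fun combs :: "nat \<Rightarrow> 'a list \<Rightarrow> 'a list list" where
  "combs 0 xs = [[]]"
| "combs (Suc s) [] = []"
| "combs (Suc s) (x # xs) = map ((#) x) (combs s xs) @ combs (Suc s) xs"

fun T_combs :: "nat \<Rightarrow> 'a list \<Rightarrow> nat" where
  "T_combs 0 xs = 1"
| "T_combs (Suc s) [] = 1"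
| "T_combs (Suc s) (x # xs) =
     T_combs s xs + T_combs (Suc s) xs + 2 * length (combs s xs) + 1"

definition sval :: "(nat \<Rightarrow> bool) \<Rightarrow> (nat \<Rightarrow> real) \<Rightarrow> nat list \<Rightarrow> real" where
  "sval m1 p S = sum_list (map (\<lambda>j. if m1 j then p j else - p j) S)"

definition T_sval :: "nat list \<Rightarrow> nat" where
  "T_sval S = 2 * length S + 1"

definition sigma_list ::
  "(nat \<Rightarrow> bool) \<Rightarrow> (nat \<Rightarrow> real) \<Rightarrow> nat \<Rightarrow> nat list \<Rightarrow> (real \<times> nat list) list" where
  "sigma_list m1 p s xs = map (\<lambda>S. (sval m1 p S, S)) (combs s xs)"

definition T_sigma_list :: "nat \<Rightarrow> nat list \<Rightarrow> nat" where
  "T_sigma_list s xs = T_combs s xs + sum_list (map (\<lambda>S. T_sval S + 1) (combs s xs)) + 1"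

fun merge :: "(real \<times> 'a) list \<Rightarrow> (real \<times> 'a) list \<Rightarrow> (real \<times> 'a) list" where
  "merge [] ys = ys"
| "merge xs [] = xs"
| "merge (x # xs) (y # ys) =
     (if fst x \<le> fst y then x # merge xs (y # ys) else y # merge (x # xs) ys)"

fun T_merge :: "(real \<times> 'a) list \<Rightarrow> (real \<times> 'a) list \<Rightarrow> nat" where
  "T_merge [] ys = 1"
| "T_merge xs [] = 1"
| "T_merge (x # xs) (y # ys) =
     1 + (if fst x \<le> fst y then T_merge xs (y # ys) else T_merge (x # xs) ys)"

function msort :: "(real \<times> 'a) list \<Rightarrow> (real \<times> 'a) list" where
  "msort xs = (if length xs \<le> 1 then xs else
     merge (msort (take (length xs div 2) xs)) (msort (drop (length xs div 2) xs)))"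
  by pat_completeness auto
termination by (relation "measure length") auto

function T_msort :: "(real \<times> 'a) list \<Rightarrow> nat" where
  "T_msort xs = (if length xs \<le> 1 then length xs + 1 else
     T_msort (take (length xs div 2) xs) + T_msort (drop (length xs div 2) xs)
     + T_merge (msort (take (length xs div 2) xs)) (msort (drop (length xs div 2) xs))
     + 2 * length xs + 1)"
  by pat_completeness auto
termination by (relation "measure length") auto

text \<open>Least index i in [lo,hi) with key > t (or hi), for sorted ys.\<close>
function lbound :: "(real \<times> 'a) list \<Rightarrow> real \<Rightarrow> nat \<Rightarrow> nat \<Rightarrow> nat" where
  "lbound ys t lo hi = (if lo < hi then
     (if fst (ys ! ((lo + hi) div 2)) > t then lbound ys t lo ((lo + hi) div 2)
      else lbound ys t (Suc ((lo + hi) div 2)) hi)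
   else lo)"
  by pat_completeness auto
termination by (relation "measure (\<lambda>(ys, t, lo, hi). hi - lo)") auto

function T_lbound :: "(real \<times> 'a) list \<Rightarrow> real \<Rightarrow> nat \<Rightarrow> nat \<Rightarrow> nat" where
  "T_lbound ys t lo hi = (if lo < hi then
     (if fst (ys ! ((lo + hi) div 2)) > t then 1 + T_lbound ys t lo ((lo + hi) div 2)
      else 1 + T_lbound ys t (Suc ((lo + hi) div 2)) hi)
   else 1)"
  by pat_completeness auto
termination by (relation "measure (\<lambda>(ys, t, lo, hi). hi - lo)") auto

definition search :: "real \<Rightarrow> (real \<times> 'a) list \<Rightarrow> real \<Rightarrow> 'a option" where
  "search \<Delta> ys x = (let i = lbound ys (- x) 0 (length ys) in
     if i < length ys \<and> fst (ys ! i) < \<Delta> - x then Some (snd (ys ! i)) else None)"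

definition T_search :: "real \<Rightarrow> (real \<times> 'a) list \<Rightarrow> real \<Rightarrow> nat" where
  "T_search \<Delta> ys x = T_lbound ys (- x) 0 (length ys) + 4"

fun scan :: "real \<Rightarrow> (real \<times> 'a) list \<Rightarrow> (real \<times> 'b) list \<Rightarrow> ('b \<times> 'a) option" where
  "scan \<Delta> ys [] = None"
| "scan \<Delta> ys ((x, S1) # rest) =
     (case search \<Delta> ys x of Some S2 \<Rightarrow> Some (S1, S2) | None \<Rightarrow> scan \<Delta> ys rest)"

fun T_scan :: "real \<Rightarrow> (real \<times> 'a) list \<Rightarrow> (real \<times> 'b) list \<Rightarrow> nat" where
  "T_scan \<Delta> ys [] = 1"
| "T_scan \<Delta> ys ((x, S1) # rest) = T_search \<Delta> ys x + 1 +
     (case search \<Delta> ys x of Some S2 \<Rightarrow> 0 | None \<Rightarrow> T_scan \<Delta> ys rest)"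

definition load_a :: "nat \<Rightarrow> (nat \<Rightarrow> real) \<Rightarrow> (nat \<Rightarrow> bool) \<Rightarrow> real" where
  "load_a n p sched = sum_list (map p (filter sched [0..<n]))"

definition load_b :: "nat \<Rightarrow> (nat \<Rightarrow> real) \<Rightarrow> (nat \<Rightarrow> bool) \<Rightarrow> real" where
  "load_b n p sched = sum_list (map p (filter (\<lambda>j. \<not> sched j) [0..<n]))"

definition mach1 :: "nat \<Rightarrow> (nat \<Rightarrow> real) \<Rightarrow> (nat \<Rightarrow> bool) \<Rightarrow> nat \<Rightarrow> bool" where
  "mach1 n p sched = (if load_a n p sched \<ge> load_b n p sched then sched else (\<lambda>j. \<not> sched j))"

definition delta :: "nat \<Rightarrow> (nat \<Rightarrow> real) \<Rightarrow> (nat \<Rightarrow> bool) \<Rightarrow> real" where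
  "delta n p sched = \<bar>load_a n p sched - load_b n p sched\<bar>"

definition A_sigma :: "nat \<Rightarrow> nat \<Rightarrow> (nat \<Rightarrow> real) \<Rightarrow> (nat \<Rightarrow> bool) \<Rightarrow> (nat \<Rightarrow> bool)
    \<Rightarrow> (real \<times> nat list) list" where
  "A_sigma k n p sched coins =
     sigma_list (mach1 n p sched) p ((k + 1) div 2) (filter coins [0..<n])"

definition B_sigma_unsorted :: "nat \<Rightarrow> nat \<Rightarrow> (nat \<Rightarrow> real) \<Rightarrow> (nat \<Rightarrow> bool) \<Rightarrow> (nat \<Rightarrow> bool)
    \<Rightarrow> (real \<times> nat list) list" where
  "B_sigma_unsorted k n p sched coins =
     sigma_list (mach1 n p sched) p (k div 2) (filter (\<lambda>j. \<not> coins j) [0..<n])"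

definition kswap_run :: "nat \<Rightarrow> nat \<Rightarrow> (nat \<Rightarrow> real) \<Rightarrow> (nat \<Rightarrow> bool) \<Rightarrow> (nat \<Rightarrow> bool)
    \<Rightarrow> bool \<times> (nat \<Rightarrow> bool)" where
  "kswap_run k n p sched coins =
     (case scan (delta n p sched) (msort (B_sigma_unsorted k n p sched coins))
                (A_sigma k n p sched coins) of
        None \<Rightarrow> (False, sched)
      | Some (S1, S2) \<Rightarrow> (True, \<lambda>j. if j \<in> set S1 \<union> set S2 then \<not> sched j else sched j))"

text \<open>Number of elementary steps of one run: loads (2n), labelling and Delta (3),
random assignment (2n), A_Sigma, B_Sigma, sorting, the search loop, and the interchange.\<close>
definition T_kswap_run :: "nat \<Rightarrow> nat \<Rightarrow> (nat \<Rightarrow> real) \<Rightarrow> (nat \<Rightarrow> bool) \<Rightarrow> (nat \<Rightarrow> bool) \<Rightarrow> nat" where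
  "T_kswap_run k n p sched coins =
     2 * n + 3 + 2 * n
     + T_sigma_list ((k + 1) div 2) (filter coins [0..<n])
     + T_sigma_list (k div 2) (filter (\<lambda>j. \<not> coins j) [0..<n])
     + T_msort (B_sigma_unsorted k n p sched coins)
     + T_scan (delta n p sched) (msort (B_sigma_unsorted k n p sched coins))
              (A_sigma k n p sched coins)
     + (case scan (delta n p sched) (msort (B_sigma_unsorted k n p sched coins))
                  (A_sigma k n p sched coins) of
          None \<Rightarrow> 1
        | Some (S1, S2) \<Rightarrow> length S1 + length S2 + 1)"

end

theory Submission
  imports Defs
begin


lemma length_combs: "length (combs s xs) = length xs choose s"
  by (induction s xs rule: combs.induct) auto

lemma combs_len: "S \<in> set (combs s xs) \<Longrightarrow> length S = s"
  by (induction s xs arbitrary: S rule: combs.induct) auto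

definition GG :: "nat \<Rightarrow> nat \<Rightarrow> nat" where
  "GG s m = (\<Sum>i\<le>s. (m+1) choose i)"

lemma GG_rec: "GG (Suc s) (Suc m) = GG s m + GG (Suc s) m"
proof -
  have "GG (Suc s) (Suc m) = 1 + (\<Sum>i\<le>s. (m+2) choose Suc i)"
    unfolding GG_def by (subst sum.atMost_Suc_shift) simp
  also have "\<dots> = 1 + (\<Sum>i\<le>s. (m+1) choose i) + (\<Sum>i\<le>s. (m+1) choose Suc i)"
    by (simp add: sum.distrib)
  also have "\<dots> = GG s m + GG (Suc s) m"
  proof -
    have "(\<Sum>i\<le>Suc s. (m+1) choose i) = 1 + (\<Sum>i\<le>s. (m+1) choose Suc i)"
      by (subst sum.atMost_Suc_shift) simp
    then show ?thesis unfolding GG_def by simp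
  qed
  finally show ?thesis .
qed

lemma T_combs_bound: "T_combs s xs + 1 \<le> 2 * GG s (length xs) + 2 * s * (length xs choose s)"
proof (induction s xs rule: T_combs.induct)
  case (1 xs) then show ?case by (simp add: GG_def)
next
  case (2 s)
  have "GG (Suc s) 0 \<ge> 1" unfolding GG_def by (subst sum.atMost_Suc_shift) simp
  then show ?case by simp
next
  case (3 s x xs)
  then show ?case by (simp add: GG_rec length_combs algebra_simps)
qed

lemma choose_le_pow': "(m::nat) choose s \<le> m ^ s"
  by (cases "s \<le> m") (auto simp: binomial_le_pow binomial_eq_0)

lemma choose_Suc_le: assumes "m \<le> N" "1 \<le> N" shows "(m+1) choose i \<le> 2 * N ^ i"
proof (cases i)
  case 0 then show ?thesis by simp
next
  case (Suc j)
  have "(m+1) choose i = (m choose Suc j) + (m choose j)" using Suc by simp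
  also have "\<dots> \<le> m ^ Suc j + m ^ j" using choose_le_pow'[of m "Suc j"] choose_le_pow'[of m j] by (rule add_mono)
  also have "\<dots> \<le> N ^ Suc j + N ^ Suc j"
  proof (rule add_mono)
    show "m ^ Suc j \<le> N ^ Suc j" using assms by (intro power_mono) auto
    have "m ^ j \<le> N ^ j" using assms by (intro power_mono) auto
    also have "\<dots> \<le> N ^ Suc j" using assms by (intro power_increasing) auto
    finally show "m ^ j \<le> N ^ Suc j" .
  qed
  finally show ?thesis using Suc by simp
qed

lemma GG_bound: assumes "m \<le> N" "1 \<le> N" shows "GG s m \<le> 2 * (s+1) * N ^ s"
proof -
  have "GG s m \<le> (\<Sum>i\<le>s. 2 * N ^ s)"
    unfolding GG_def
  proof (rule sum_mono)
    fix i assume "i \<in> {..s}"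
    then have "N ^ i \<le> N ^ s" using assms by (intro power_increasing) auto
    then show "(m+1) choose i \<le> 2 * N ^ s" using choose_Suc_le[OF assms, of i] by linarith
  qed
  then show ?thesis by simp
qed

lemma sum_list_const: "\<forall>x\<in>set xs. f x = c \<Longrightarrow> sum_list (map f xs) = length xs * c"
  by (induction xs) auto

lemma T_sigma_list_eq: "T_sigma_list s xs = T_combs s xs + (2*s+2) * (length xs choose s) + 1"
proof -
  have "sum_list (map (\<lambda>S. T_sval S + 1) (combs s xs)) = length (combs s xs) * (2*s+2)"
    by (rule sum_list_const) (auto simp: T_sval_def combs_len)
  then show ?thesis by (simp add: T_sigma_list_def length_combs mult.commute)
qed



declare msort.simps[simp del] T_msort.simps[simp del] lbound.simps[simp del] T_lbound.simps[simp del]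

lemma length_merge: "length (merge xs ys) = length xs + length ys"
  by (induction xs ys rule: merge.induct) auto

lemma set_merge: "set (merge xs ys) = set xs \<union> set ys"
  by (induction xs ys rule: merge.induct) auto

lemma length_msort: "length (msort xs) = length xs"
proof (induction xs rule: msort.induct)
  case (1 xs)
  show ?case
  proof (cases "length xs \<le> 1")
    case True then show ?thesis by (subst msort.simps) simp
  next
    case False then show ?thesis using 1 by (subst msort.simps) (simp add: length_merge)
  qed
qed

lemma set_msort: "set (msort xs) \<subseteq> set xs"
proof (induction xs rule: msort.induct)
  case (1 xs)
  show ?case
  proof (cases "length xs \<le> 1")
    case True then show ?thesis by (subst msort.simps) simp
  next
    case False
    then have "set (msort xs) = set (msort (take (length xs div 2) xs)) \<union> set (msort (drop (length xs div 2) xs))"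
      by (subst msort.simps) (simp add: set_merge)
    then show ?thesis using 1 False by (auto dest: in_set_takeD in_set_dropD)
  qed
qed

lemma T_merge_bound: "T_merge xs ys \<le> length xs + length ys + 1"
  by (induction xs ys rule: T_merge.induct) auto

lemma T_msort_bound: "length xs \<le> 2 ^ D \<Longrightarrow> T_msort xs \<le> 5 * length xs * (D + 1) + 2"
proof (induction D arbitrary: xs)
  case 0
  then show ?case by (subst T_msort.simps) simp
next
  case (Suc D)
  show ?case
  proof (cases "length xs \<le> 1")
    case True then show ?thesis by (subst T_msort.simps) simp
  next
    case False
    let ?L = "length xs"
    let ?a = "take (?L div 2) xs" and ?b = "drop (?L div 2) xs"
    have la: "length ?a = ?L div 2" and lb: "length ?b = ?L - ?L div 2" by auto
    have "?L div 2 \<le> 2 ^ D" "?L - ?L div 2 \<le> 2 ^ D" using Suc.prems by auto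
    then have h1: "T_msort ?a \<le> 5 * (?L div 2) * (D+1) + 2" and h2: "T_msort ?b \<le> 5 * (?L - ?L div 2) * (D+1) + 2"
      using Suc.IH[of ?a] Suc.IH[of ?b] la lb by auto
    have h3: "T_merge (msort ?a) (msort ?b) \<le> ?L + 1"
      using T_merge_bound[of "msort ?a" "msort ?b"] by (simp add: length_msort)
    have eq: "T_msort xs = T_msort ?a + T_msort ?b + T_merge (msort ?a) (msort ?b) + 2 * ?L + 1"
      using False by (subst T_msort.simps) simp
    have "5 * (?L div 2) * (D+1) + 5 * (?L - ?L div 2) * (D+1) = 5 * ?L * (D+1)"
    proof -
      have "?L div 2 + (?L - ?L div 2) = ?L" by simp
      moreover have "5*a*(D+1)+5*b*(D+1) = 5*(a+b)*(D+1)" for a b :: nat by (simp add: algebra_simps)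
      ultimately show ?thesis by metis
    qed
    then show ?thesis using eq h1 h2 h3 False by simp
  qed
qed

lemma T_lbound_bound: "hi - lo < 2 ^ D \<Longrightarrow> T_lbound ys t lo hi \<le> D + 1"
proof (induction D arbitrary: lo hi)
  case 0
  then show ?case by (subst T_lbound.simps) simp
next
  case (Suc D)
  show ?case
  proof (cases "lo < hi")
    case False then show ?thesis by (subst T_lbound.simps) simp
  next
    case True
    let ?m = "(lo + hi) div 2"
    have "?m - lo < 2 ^ D" "hi - Suc ?m < 2 ^ D" using Suc.prems True by auto
    then have "T_lbound ys t lo ?m \<le> D + 1" "T_lbound ys t (Suc ?m) hi \<le> D + 1"
      using Suc.IH by auto
    then show ?thesis using True by (subst T_lbound.simps) simp
  qed
qed

lemma T_scan_bound: "(\<And>x. T_search \<Delta> ys x \<le> c) \<Longrightarrow> T_scan \<Delta> ys xs \<le> length xs * (c + 1) + 1"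
proof (induction \<Delta> ys xs rule: T_scan.induct)
  case (1 \<Delta> ys) then show ?case by simp
next
  case (2 \<Delta> ys x S1 rest)
  have c: "T_search \<Delta> ys x \<le> c" using 2(2) .
  show ?case
  proof (cases "search \<Delta> ys x")
    case None
    then have "T_scan \<Delta> ys rest \<le> length rest * (c + 1) + 1" using 2 by blast
    then show ?thesis using None c by simp
  next
    case (Some a) then show ?thesis using c by simp
  qed
qed

lemma search_in: "search \<Delta> ys x = Some S2 \<Longrightarrow> \<exists>y. (y, S2) \<in> set ys"
  unfolding search_def Let_def
  by (auto split: if_splits intro!: exI[of _ "fst (ys ! lbound ys (- x) 0 (length ys))"])

lemma scan_in: "scan \<Delta> ys xs = Some (S1, S2) \<Longrightarrow> (\<exists>x. (x, S1) \<in> set xs) \<and> (\<exists>y. (y, S2) \<in> set ys)"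
proof (induction \<Delta> ys xs rule: scan.induct)
  case (1 \<Delta> ys) then show ?case by simp
next
  case (2 \<Delta> ys x S1' rest)
  then show ?case using search_in[of \<Delta> ys x] by (auto split: option.splits)
qed



lemma ceil_half: "nat \<lceil>real k / 2\<rceil> = (k + 1) div 2"
proof (cases "even k")
  case True then obtain q where "k = 2*q" by blast
  then show ?thesis by simp
next
  case False then obtain q where q: "k = 2*q+1" using oddE by blast
  have "\<lceil>real k / 2\<rceil> = int q + 1"
    unfolding q by (intro ceiling_unique) auto
  then show ?thesis using q by simp
qed

lemma ln2_half: "ln (2::real) \<ge> 1/2"
proof -
  have "exp (1/2::real) \<le> 2"
  proof -
    have "exp (1/2::real) ^ 2 = exp 1" by (simp flip: exp_of_nat_mult)
    also have "\<dots> \<le> 4" using exp_le by simp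
    finally have "exp (1/2::real) ^ 2 \<le> 2 ^ 2" by simp
    then show ?thesis by (rule power2_le_imp_le) simp
  qed
  then have "ln (exp (1/2::real)) \<le> ln 2" by (subst ln_le_cancel_iff) auto
  then show ?thesis by simp
qed

lemma log_choice:
  assumes "n \<ge> 2"
  obtains d :: nat where "n \<le> 2 ^ d" "real (d + 1) \<le> 6 * ln (real n)"
proof -
  define d where "d = nat \<lceil>log 2 (real n)\<rceil>"
  have lg1: "log 2 (real n) \<ge> 1" using assms by simp
  have "real n = 2 powr (log 2 (real n))" using assms by simp
  also have "\<dots> \<le> 2 powr (real d)" unfolding d_def
    by (intro powr_mono) (use lg1 in auto)
  also have "\<dots> = 2 ^ d" by (simp add: powr_realpow)
  finally have "n \<le> 2 ^ d" by (metis of_nat_le_iff of_nat_numeral of_nat_power)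
  moreover have "real (d + 1) \<le> 6 * ln (real n)"
  proof -
    have "real d \<le> log 2 (real n) + 1" unfolding d_def using lg1 by linarith
    then have "real (d+1) \<le> 3 * log 2 (real n)" using lg1 by simp
    also have "\<dots> = 3 * (ln (real n) / ln 2)" by (simp add: log_def)
    also have "\<dots> \<le> 6 * ln (real n)"
    proof -
      have "ln (real n) \<ge> 0" using assms by simp
      then have "ln (real n) / ln 2 \<le> ln (real n) / (1/2)"
        using ln2_half by (intro divide_left_mono) auto
      then show ?thesis by simp
    qed
    finally show ?thesis .
  qed
  ultimately show ?thesis using that by blast
qed




lemma main_nat:
  assumes n1: "n \<ge> 1" and k1: "k \<ge> 1" and nd: "n \<le> 2 ^ d"
  shows "T_kswap_run k n p sched coins \<le> 60 * (k * n ^ ((k + 1) div 2) * (d + 1))"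
proof -
  define s1 where "s1 = (k + 1) div 2"
  define s2 where "s2 = k div 2"
  define xa where "xa = filter coins [0..<n]"
  define xb where "xb = filter (\<lambda>j. \<not> coins j) [0..<n]"
  define N where "N = n ^ s1"
  define P where "P = k * N * (d + 1)"
  define B where "B = B_sigma_unsorted k n p sched coins"
  define A where "A = A_sigma k n p sched coins"
  define \<Delta> where "\<Delta> = delta n p sched"
  have s12: "s2 \<le> s1" "s1 \<le> k" "s2 \<le> k" "1 \<le> s1" using k1 unfolding s1_def s2_def by auto
  have ma: "length xa \<le> n" and mb: "length xb \<le> n" unfolding xa_def xb_def
    by (metis diff_zero length_filter_le length_upt)+
  have N1: "1 \<le> N" unfolding N_def using n1 by simp
  have nN: "n \<le> N" unfolding N_def using n1 s12
    by (metis power_increasing power_one_right)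
  have pow2: "n ^ s2 \<le> N" unfolding N_def using n1 s12 by (intro power_increasing) auto
  have NA: "length xa choose s1 \<le> N" unfolding N_def
    using choose_le_pow'[of "length xa" s1] power_mono[OF ma, of s1] by linarith
  have NB: "length xb choose s2 \<le> N"
    using choose_le_pow'[of "length xb" s2] power_mono[OF mb, of s2] pow2 by linarith
  have NB2: "length xb choose s2 \<le> 2 ^ (d * s2)"
    using choose_le_pow'[of "length xb" s2] power_mono[OF mb, of s2] power_mono[OF nd, of s2]
    by (simp add: power_mult[symmetric] mult.commute)
  have lenA: "length A = length xa choose s1"
    unfolding A_def A_sigma_def sigma_list_def xa_def s1_def by (simp add: length_combs)
  have lenB: "length B = length xb choose s2"
    unfolding B_def B_sigma_unsorted_def sigma_list_def xb_def s2_def by (simp add: length_combs)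
  have GA: "GG s1 (length xa) \<le> 2 * (s1 + 1) * N" unfolding N_def using GG_bound[OF ma n1] .
  have GB: "GG s2 (length xb) \<le> 2 * (s1 + 1) * N"
  proof -
    have "GG s2 (length xb) \<le> 2 * (s2 + 1) * n ^ s2" using GG_bound[OF mb n1] .
    also have "\<dots> \<le> 2 * (s1 + 1) * N" using s12 pow2 by (intro mult_mono) auto
    finally show ?thesis .
  qed
  have TA: "T_sigma_list s1 xa \<le> 14 * (k * N)"
  proof -
    have "T_sigma_list s1 xa + 1 \<le> 2 * GG s1 (length xa) + 2 * s1 * (length xa choose s1) + (2*s1+2) * (length xa choose s1) + 1"
      using T_combs_bound[of s1 xa] T_sigma_list_eq[of s1 xa] by simp
    also have "\<dots> \<le> 2 * (2 * (s1 + 1) * N) + 2 * s1 * N + (2*s1+2) * N + 1"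
      using GA NA by (intro add_mono mult_le_mono) auto
    also have "\<dots> = (8 * s1 + 6) * N + 1" by (simp add: algebra_simps)
    also have "\<dots> \<le> (14 * k) * N + 1" using s12 by (intro add_mono mult_le_mono) auto
    finally show ?thesis by simp
  qed
  have TB: "T_sigma_list s2 xb \<le> 14 * (k * N)"
  proof -
    have "T_sigma_list s2 xb + 1 \<le> 2 * GG s2 (length xb) + 2 * s2 * (length xb choose s2) + (2*s2+2) * (length xb choose s2) + 1"
      using T_combs_bound[of s2 xb] T_sigma_list_eq[of s2 xb] by simp
    also have "\<dots> \<le> 2 * (2 * (s1 + 1) * N) + 2 * s1 * N + (2*s1+2) * N + 1"
      using GB NB s12 by (intro add_mono mult_le_mono) auto
    also have "\<dots> = (8 * s1 + 6) * N + 1" by (simp add: algebra_simps)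
    also have "\<dots> \<le> (14 * k) * N + 1" using s12 by (intro add_mono mult_le_mono) auto
    finally show ?thesis by simp
  qed
  have dk: "d * s2 \<le> d * k" using s12 by simp
  have TM: "T_msort B \<le> 5 * P + 2"
  proof -
    have "T_msort B \<le> 5 * length B * (d * s2 + 1) + 2"
      using T_msort_bound[of B "d * s2"] lenB NB2 by simp
    also have "\<dots> \<le> 5 * N * (d * k + 1) + 2" using lenB NB dk s12 by (intro add_mono mult_le_mono) auto
    also have "\<dots> \<le> 5 * P + 2" unfolding P_def using k1
      by (simp add: algebra_simps)
    finally show ?thesis .
  qed
  have TS: "T_scan \<Delta> (msort B) A \<le> N * (d * k + 7) + 1"
  proof -
    have "\<And>x. T_search \<Delta> (msort B) x \<le> d * k + 6"
    proof -
      fix x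
      have p2: "(2::nat) ^ (d * s2) < 2 ^ (d * s2 + 1)" by simp
      have "length (msort B) - 0 < 2 ^ (d * s2 + 1)" using NB2 lenB p2 length_msort[of B] by linarith
      then have "T_lbound (msort B) (- x) 0 (length (msort B)) \<le> d * s2 + 1 + 1"
        by (rule T_lbound_bound)
      then show "T_search \<Delta> (msort B) x \<le> d * k + 6" unfolding T_search_def using dk by linarith
    qed
    then have "T_scan \<Delta> (msort B) A \<le> length A * (d * k + 6 + 1) + 1" by (rule T_scan_bound)
    also have "\<dots> \<le> N * (d * k + 7) + 1" using lenA NA by (simp add: mult_le_mono)
    finally show ?thesis .
  qed
  have TF: "(case scan \<Delta> (msort B) A of None \<Rightarrow> 1 | Some (S1, S2) \<Rightarrow> length S1 + length S2 + 1) \<le> k + 1"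
  proof (cases "scan \<Delta> (msort B) A")
    case None then show ?thesis by simp
  next
    case (Some r)
    obtain S1 S2 where r: "r = (S1, S2)" by fastforce
    from scan_in[of \<Delta> "msort B" A S1 S2] Some r obtain x y where
      "(x, S1) \<in> set A" "(y, S2) \<in> set (msort B)" by auto
    then have "(x, S1) \<in> set A" "(y, S2) \<in> set B" using set_msort by auto
    then have "length S1 = s1" "length S2 = s2"
      unfolding A_def A_sigma_def B_def B_sigma_unsorted_def sigma_list_def s1_def s2_def
      by (auto dest: combs_len)
    moreover have "s1 + s2 = k" unfolding s1_def s2_def by simp
    ultimately show ?thesis using Some r by simp
  qed
  have eqT: "T_kswap_run k n p sched coins = 2 * n + 3 + 2 * n + T_sigma_list s1 xa + T_sigma_list s2 xb
     + T_msort B + T_scan \<Delta> (msort B) A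
     + (case scan \<Delta> (msort B) A of None \<Rightarrow> 1 | Some (S1, S2) \<Rightarrow> length S1 + length S2 + 1)"
    unfolding T_kswap_run_def s1_def s2_def xa_def xb_def B_def A_def \<Delta>_def by simp
  have f1: "k * N \<le> P" unfolding P_def by simp
  have f2: "N \<le> k * N" using k1 by simp
  have f3: "k \<le> k * N" using N1 by simp
  have f4: "1 \<le> k" using k1 .
  have f5: "N * (d * k) \<le> P" unfolding P_def by (simp add: algebra_simps)
  have "T_kswap_run k n p sched coins \<le> 4 * N + 3 + 14 * (k * N) + 14 * (k * N) + (5 * P + 2) + (N * (d * k) + 7 * N + 1) + (k + 1)"
    using eqT TA TB TM TS TF nN by (simp add: algebra_simps)
  also have "\<dots> \<le> 60 * P" using f1 f2 f3 f4 f5 by linarith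
  finally show ?thesis unfolding P_def N_def s1_def .
qed

theorem lemma2:
  shows "\<exists>C > 0. \<forall>n \<ge> 2. \<forall>k \<ge> 1. \<forall>(p :: nat \<Rightarrow> real) (sched :: nat \<Rightarrow> bool) (coins :: nat \<Rightarrow> bool).
           (\<forall>j < n. p j > 0) \<longrightarrow>
           real (T_kswap_run k n p sched coins)
             \<le> C * real k * real n ^ nat \<lceil>real k / 2\<rceil> * ln (real n)"
proof (intro exI[of _ 360] conjI allI impI)
  fix n k :: nat and p :: "nat \<Rightarrow> real" and sched coins :: "nat \<Rightarrow> bool"
  assume n2: "n \<ge> 2" and k1: "k \<ge> 1"
  obtain d where nd: "n \<le> 2 ^ d" and dl: "real (d + 1) \<le> 6 * ln (real n)"
    using log_choice[OF n2] by blast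
  have "T_kswap_run k n p sched coins \<le> 60 * (k * n ^ ((k + 1) div 2) * (d + 1))"
    using main_nat[of n k d p sched coins] n2 k1 nd by simp
  then have "real (T_kswap_run k n p sched coins) \<le> 60 * (real k * real n ^ ((k + 1) div 2) * real (d + 1))"
    by (metis of_nat_le_iff of_nat_mult of_nat_numeral of_nat_power)
  also have "\<dots> \<le> 60 * (real k * real n ^ ((k + 1) div 2) * (6 * ln (real n)))"
    by (intro mult_left_mono dl) auto
  also have "\<dots> = 360 * real k * real n ^ nat \<lceil>real k / 2\<rceil> * ln (real n)"
    by (simp add: ceil_half)
  finally show "real (T_kswap_run k n p sched coins) \<le> 360 * real k * real n ^ nat \<lceil>real k / 2\<rceil> * ln (real n)" .
qed simp


end
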